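(* Fix $n\ge 2$ and let, for $1\le i\le n$, $(a_i,a_i',a_i'')$ be triples of regular closed subsets of $\mathbb{R}^2$ with $a_i''\neq\emptyset$, $a_i''\cap\overline{\mathbb{R}^2\setminus a_i'}=\emptyset$ and $a_i'\cap\overline{\mathbb{R}^2\setminus a_i}=\emptyset$, such that: $a_i'\cup a_{i+1}''\cup\dots\cup a_n''$ is connected for each $1\le i\le n-1$; $a_n'$ is connected; and $a_i\cap a_j=\emptyset$ for all $1\le i,j\le n$ with $j-i>1$. Then for every point $p_0\in a_1'$ and every point $p_n\in a_n''$ there exist points $p_1,\dots,p_{n-1}$ and Jordan arcs $\alpha_1,\dots,\alpha_n$ such that: (i) the concatenation $\alpha=\alpha_1\cdots\alpha_n$ is a Jordan arc from $p_0$ to $p_n$; (ii) $p_i\in a_{i+1}'\cap\alpha_i$ for all $1\le i<n$; and (iii) $\alpha_i\subseteq a_i$ for all $1\le i\le n$.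
   Context: A Jordan arc is a continuous injective map $[0,1]\to\mathbb{R}^2$ or a constant map, identified with its image. The concatenation $\alpha_1\cdots\alpha_n$ being a Jordan arc from $p_0$ to $p_n$ means each $\alpha_i$ ends where $\alpha_{i+1}$ begins, $\alpha_1$ starts at $p_0$, $\alpha_n$ ends at $p_n$, and the union traversed in order is a Jordan arc. *)

theory Defs
  imports "HOL-Analysis.Analysis"
begin

definition regular_closed :: "'a::topological_space set \<Rightarrow> bool" where
  "regular_closed S \<longleftrightarrow> closure (interior S) = S"

definition jordan_arc :: "(real \<Rightarrow> 'a::topological_space) \<Rightarrow> bool" where
  "jordan_arc g \<longleftrightarrow> arc g \<or> (\<exists>c. \<forall>t\<in>{0..1}. g t = c)"

fun join_list :: "(real \<Rightarrow> 'a::topological_space) list \<Rightarrow> (real \<Rightarrow> 'a)" where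
  "join_list [] = (\<lambda>t. undefined)"
| "join_list [g] = g"
| "join_list (g # gs) = g +++ join_list gs"

text \<open>A concatenation of Jordan arcs (some possibly constant) "traversed in order is a
  Jordan arc": the concatenated path is continuous and only repeats a point by staying
  at it, i.e. all its fibres over [0,1] are intervals (so, after collapsing the constant
  pieces, it is injective).\<close>
definition traversed_jordan_arc :: "(real \<Rightarrow> 'a::topological_space) \<Rightarrow> bool" where
  "traversed_jordan_arc g \<longleftrightarrow> path g \<and>
     (\<forall>s t. 0 \<le> s \<and> s \<le> t \<and> t \<le> 1 \<and> g s = g t \<longrightarrow> (\<forall>u\<in>{s..t}. g u = g s))"

end

theory Submission
  imports Defs
begin

lemma t1: fixes x y u :: "'a::real_normed_vector" assumes "t = 0" "t *\<^sub>R x = t *\<^sub>R y - (s + (1-t)*(\<delta>/2)) *\<^sub>R u"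
  shows "(s + \<delta>/2) *\<^sub>R u = 0" using assms by simp
lemma t2: fixes x y u :: "'a::real_normed_vector" assumes "t \<noteq> 0" shows "x = (1/t) *\<^sub>R (t *\<^sub>R x)" using assms by simp
lemma t3: fixes x y u :: "'a::real_normed_vector" assumes "t \<noteq> 0" shows "(1/t) *\<^sub>R (t *\<^sub>R y - c *\<^sub>R u) = y - (c/t) *\<^sub>R u"
  using assms by (simp add: scaleR_diff_right)
lemma t4: fixes x y u :: "'a::real_normed_vector" assumes "z = (1 - t) *\<^sub>R (y + (\<delta>/2) *\<^sub>R u) + t *\<^sub>R x" "z = y - s *\<^sub>R u"
  shows "t *\<^sub>R x = t *\<^sub>R y - (s + (1-t)*(\<delta>/2)) *\<^sub>R u"
proof -
  have "t *\<^sub>R x = z - (1 - t) *\<^sub>R (y + (\<delta>/2) *\<^sub>R u)" using assms(1) by simp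
  also have "\<dots> = y - s *\<^sub>R u - (1 - t) *\<^sub>R (y + (\<delta>/2) *\<^sub>R u)" using assms(2) by simp
  also have "\<dots> = t *\<^sub>R y - (s + (1-t)*(\<delta>/2)) *\<^sub>R u" by (simp add: algebra_simps)
  finally show ?thesis .
qed

definition ray :: "'a::real_normed_vector \<Rightarrow> 'a \<Rightarrow> 'a set" where
  "ray y u = {y - s *\<^sub>R u | s. s \<ge> 0}"

lemma star_ray:
  fixes y u x :: "'a::real_normed_vector"
  assumes u: "norm u = 1" and d: "\<delta> > 0" and x: "x \<notin> ray y u"
  shows "closed_segment (y + (\<delta>/2) *\<^sub>R u) x \<inter> ray y u = {}"
proof (rule ccontr)
  assume "closed_segment (y + (\<delta>/2) *\<^sub>R u) x \<inter> ray y u \<noteq> {}"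
  then obtain z where z: "z \<in> closed_segment (y + (\<delta>/2) *\<^sub>R u) x" "z \<in> ray y u" by blast
  from z(1) obtain t where t: "0 \<le> t" "t \<le> 1" and z1: "z = (1 - t) *\<^sub>R (y + (\<delta>/2) *\<^sub>R u) + t *\<^sub>R x"
    unfolding in_segment by blast
  from z(2) obtain s where s: "s \<ge> 0" and z2: "z = y - s *\<^sub>R u"
    unfolding ray_def by blast
  have u0: "u \<noteq> 0" using u by force
  have eq: "t *\<^sub>R x = t *\<^sub>R y - (s + (1-t)*(\<delta>/2)) *\<^sub>R u"
    using t4[OF z1 z2] .
  show False
  proof (cases "t = 0")
    case True
    then have "(s + \<delta>/2) *\<^sub>R u = 0" using t1[OF True eq] by simp
    then show False using u0 s d by simp
  next
    case False
    have "x = (1/t) *\<^sub>R (t *\<^sub>R x)" using t2[OF False] .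
    also have "\<dots> = y - ((s + (1-t)*(\<delta>/2))/t) *\<^sub>R u" unfolding eq using t3[OF False] .
    finally have "x = y - ((s + (1-t)*(\<delta>/2))/t) *\<^sub>R u" .
    moreover have "(s + (1-t)*(\<delta>/2))/t \<ge> 0" using s t d by simp
    ultimately show False using x unfolding ray_def by blast
  qed
qed

definition straight :: "'a::real_normed_vector set \<Rightarrow> 'a \<Rightarrow> bool" where
  "straight S y \<longleftrightarrow> (\<exists>\<delta>>0. \<exists>u. norm u = 1 \<and> S \<inter> ball y \<delta> \<subseteq> ray y u)"

lemma straight_subset: "straight S y \<Longrightarrow> T \<subseteq> S \<Longrightarrow> straight T y"
  unfolding straight_def by blast

lemma straight_sing: "straight {y::'a::euclidean_space} y"
proof -
  obtain b :: 'a where "b \<in> Basis" using nonempty_Basis by blast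
  then have "norm b = 1" by simp
  moreover have "y \<in> ray y b" unfolding ray_def by (rule CollectI, rule exI[of _ 0]) simp
  ultimately have "{y} \<inter> ball y 1 \<subseteq> ray y b \<and> norm b = 1" by blast
  then show ?thesis unfolding straight_def using zero_less_one by blast
qed

lemma orth2:
  fixes u :: "real^2"
  assumes "u \<noteq> 0"
  obtains v where "v \<noteq> 0" "inner u v = 0"
proof -
  define v :: "real^2" where "v = (\<chi> i. if i = 1 then - (u$2) else u$1)"
  have v1: "v$1 = - (u$2)" and v2: "v$2 = u$1" unfolding v_def by auto
  have "inner u v = 0" unfolding inner_vec_def sum_2 using v1 v2 by simp
  moreover have "v \<noteq> 0"
  proof
    assume "v = 0"
    then have "u$1 = 0" "u$2 = 0" using v1 v2 by auto
    then have "u = 0" by (metis exhaust_2 vec_eq_iff zero_index)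
    then show False using assms by simp
  qed
  ultimately show ?thesis using that by blast
qed

lemma seg_ray:
  fixes p u :: "'a::real_normed_vector"
  assumes u: "norm u = 1" and d: "\<delta> > 0"
  shows "closed_segment p (p + (\<delta>/2) *\<^sub>R u) \<inter> ray p u \<subseteq> {p}"
proof
  fix z assume z: "z \<in> closed_segment p (p + (\<delta>/2) *\<^sub>R u) \<inter> ray p u"
  have zs: "z \<in> closed_segment p (p + (\<delta>/2) *\<^sub>R u)" and zr: "z \<in> ray p u" using z by auto
  from zs obtain t where t: "0 \<le> t" "t \<le> 1" and z1: "z = (1 - t) *\<^sub>R p + t *\<^sub>R (p + (\<delta>/2) *\<^sub>R u)"
    unfolding in_segment by blast
  from zr obtain s where s: "s \<ge> 0" and z2: "z = p - s *\<^sub>R u"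
    unfolding ray_def by blast
  have "z = p + (t * (\<delta>/2)) *\<^sub>R u" using z1 by (simp add: algebra_simps)
  then have "(t * (\<delta>/2) + s) *\<^sub>R u = 0" using z2 by (simp add: algebra_simps)
  moreover have "u \<noteq> 0" using u by force
  ultimately have "t * (\<delta>/2) + s = 0" by (simp only: scaleR_eq_0_iff) blast
  moreover have "t * (\<delta>/2) \<ge> 0" using t d by simp
  ultimately have "t * (\<delta>/2) = 0" using s by linarith
  then have "t = 0" using d by simp
  then show "z \<in> {p}" using z1 by simp
qed

lemma escape:
  fixes U F :: "(real^2) set" and p :: "real^2"
  assumes U: "open U" and F: "closed F" and pU: "p \<in> U" and pF: "p \<in> F" and st: "straight F p"
  obtains q0 \<delta> where "\<delta> > 0" "ball p \<delta> \<subseteq> U" "closed_segment p q0 \<subseteq> U"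
     "closed_segment p q0 \<inter> F \<subseteq> {p}"
     "\<And>x. x \<in> ball p \<delta> \<Longrightarrow> x \<notin> F \<Longrightarrow> path_component (U - F) q0 x"
proof -
  obtain \<delta>0 u where d0: "\<delta>0 > 0" and u: "norm u = 1" and Fr: "F \<inter> ball p \<delta>0 \<subseteq> ray p u"
    using st unfolding straight_def by blast
  obtain \<delta>1 where d1: "\<delta>1 > 0" and b1: "ball p \<delta>1 \<subseteq> U" using U pU openE by blast
  define \<delta> where "\<delta> = min \<delta>0 \<delta>1"
  have d: "\<delta> > 0" using d0 d1 unfolding \<delta>_def by simp
  have bU: "ball p \<delta> \<subseteq> U" using b1 unfolding \<delta>_def by auto
  have Fr': "F \<inter> ball p \<delta> \<subseteq> ray p u" using Fr unfolding \<delta>_def by auto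
  define q0 where "q0 = p + (\<delta>/2) *\<^sub>R u"
  have q0b: "q0 \<in> ball p \<delta>" unfolding q0_def using u d by (simp add: dist_norm)
  have segb: "closed_segment p q0 \<subseteq> ball p \<delta>"
    using q0b d by (simp add: closed_segment_subset convex_ball)
  have segF: "closed_segment p q0 \<inter> F \<subseteq> {p}"
    using seg_ray[OF u d, of p] segb Fr' unfolding q0_def by blast
  have star: "path_component (U - F) q0 x" if x: "x \<in> ball p \<delta>" "x \<notin> ray p u" for x
  proof -
    have "closed_segment q0 x \<inter> ray p u = {}" using star_ray[OF u d x(2)] unfolding q0_def .
    moreover have "closed_segment q0 x \<subseteq> ball p \<delta>"
      using q0b x(1) by (simp add: closed_segment_subset convex_ball)
    ultimately have "closed_segment q0 x \<subseteq> U - F" using bU Fr' by blast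
    then show ?thesis by (rule path_component_linepath)
  qed
  have main: "path_component (U - F) q0 x" if x: "x \<in> ball p \<delta>" "x \<notin> F" for x
  proof (cases "x \<in> ray p u")
    case False then show ?thesis using star x by blast
  next
    case True
    then obtain s where s: "x = p - s *\<^sub>R u" unfolding ray_def by blast
    have "open ((U - F) \<inter> ball p \<delta>)" using U F by (intro open_Int open_Diff) auto
    moreover have "x \<in> (U - F) \<inter> ball p \<delta>" using x bU by auto
    ultimately obtain r where r: "r > 0" "ball x r \<subseteq> (U - F) \<inter> ball p \<delta>" using openE by metis
    have "u \<noteq> 0" using u by force
    then obtain v where v: "v \<noteq> 0" "inner u v = 0" using orth2 by blast
    define c where "c = r / (2 * norm v)"
    have c: "c > 0" using r v unfolding c_def by simp
    define x' where "x' = x + c *\<^sub>R v"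
    have "dist x x' = r/2" unfolding x'_def c_def using v r by (simp add: dist_norm)
    then have x'b: "x' \<in> ball x r" using r by simp
    have x'r: "x' \<notin> ray p u"
    proof
      assume "x' \<in> ray p u"
      then obtain s' where s': "x' = p - s' *\<^sub>R u" unfolding ray_def by blast
      have "c *\<^sub>R v = x' - x" unfolding x'_def by simp
      also have "\<dots> = (p - s' *\<^sub>R u) - (p - s *\<^sub>R u)" using s s' by simp
      also have "\<dots> = (s - s') *\<^sub>R u" by (simp add: scaleR_diff_left)
      finally have "c *\<^sub>R v = (s - s') *\<^sub>R u" .
      then have "inner (c *\<^sub>R v) v = inner ((s - s') *\<^sub>R u) v" by simp
      then have "c * inner v v = 0" using v(2) by simp
      then show False using c v(1) by simp
    qed
    have x'pd: "x' \<in> ball p \<delta>" using x'b r(2) by blast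
    have pc1: "path_component (U - F) q0 x'" using star[OF x'pd x'r] .
    have "closed_segment x' x \<subseteq> ball x r"
      using x'b r(1) by (simp add: closed_segment_subset convex_ball)
    then have "closed_segment x' x \<subseteq> U - F" using r(2) by blast
    then have "path_component (U - F) x' x" by (rule path_component_linepath)
    with pc1 show ?thesis by (rule path_component_trans)
  qed
  have segU: "closed_segment p q0 \<subseteq> U" using segb bU by (rule subset_trans)
  show ?thesis by (rule that[OF d bU segU segF main])
qed

lemma pc_closure:
  fixes U F :: "'a::real_normed_vector set"
  assumes U: "open U" and F: "closed F" and x: "x \<in> U" "x \<notin> F"
    and xc: "x \<in> closure (path_component_set (U - F) q0)"
  shows "path_component (U - F) q0 x"
proof -
  have "open (U - F)" using U F by (rule open_Diff)
  then obtain r where r: "r > 0" "ball x r \<subseteq> U - F" using x openE by (metis Diff_iff)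
  obtain y where y: "y \<in> path_component_set (U - F) q0" "dist y x < r"
    using xc r(1) unfolding closure_approachable by blast
  have pc1: "path_component (U - F) q0 y" using y(1) by simp
  have "y \<in> ball x r" using y(2) by (simp add: dist_commute)
  then have "closed_segment y x \<subseteq> ball x r" using r(1) by (simp add: closed_segment_subset convex_ball)
  then have "closed_segment y x \<subseteq> U - F" using r(2) by blast
  then have "path_component (U - F) y x" by (rule path_component_linepath)
  with pc1 show ?thesis by (rule path_component_trans)
qed

lemma clopen_arg:
  fixes U F C :: "'a::real_normed_vector set"
  assumes U: "open U" and F: "closed F" and pF: "p \<in> F" and d: "\<delta> > 0"
    and esc: "\<And>x. x \<in> ball p \<delta> \<Longrightarrow> x \<notin> F \<Longrightarrow> path_component (U - F) q0 x"
    and C: "connected C" and pC: "p \<in> C" and CF: "C \<inter> F \<subseteq> {p}"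
    and cl: "\<And>x. x \<in> C \<Longrightarrow> x \<in> closure (path_component_set (U - F) q0) \<Longrightarrow> x \<in> U"
  shows "C \<subseteq> path_component_set (U - F) q0 \<union> {p}"
proof (rule ccontr)
  define Q where "Q = path_component_set (U - F) q0"
  assume "\<not> C \<subseteq> path_component_set (U - F) q0 \<union> {p}"
  then obtain x0 where x0: "x0 \<in> C" "x0 \<notin> Q" "x0 \<noteq> p" unfolding Q_def by blast
  have inQ: "x \<in> Q" if "x \<in> C" "x \<noteq> p" "x \<in> closure Q" for x
  proof -
    have "x \<notin> F" using that CF by blast
    moreover have "x \<in> U" using cl that unfolding Q_def by blast
    ultimately show ?thesis using pc_closure[OF U F] that unfolding Q_def by simp
  qed
  define A where "A = Q \<union> ball p \<delta>"
  define B where "B = - (closure Q \<union> {p})"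
  have oQ: "open Q" unfolding Q_def using U F by (intro open_path_component open_Diff)
  have oA: "open A" unfolding A_def using oQ by (intro open_Un) auto
  have oB: "open B" unfolding B_def by (intro open_Compl closed_Un) auto
  have "C \<subseteq> A \<union> B"
  proof
    fix x assume x: "x \<in> C"
    show "x \<in> A \<union> B"
    proof (cases "x = p")
      case True then show ?thesis using d unfolding A_def by simp
    next
      case False
      show ?thesis
      proof (cases "x \<in> closure Q")
        case True then show ?thesis using inQ[OF x False] unfolding A_def by blast
      next
        case False2: False then show ?thesis using False unfolding B_def by blast
      qed
    qed
  qed
  moreover have "A \<inter> B \<inter> C = {}"
  proof (rule equals0I)
    fix x assume x: "x \<in> A \<inter> B \<inter> C"
    then have xB: "x \<notin> closure Q" "x \<noteq> p" unfolding B_def by auto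
    have "x \<notin> Q" using xB(1) closure_subset by blast
    then have "x \<in> ball p \<delta>" using x unfolding A_def by blast
    moreover have "x \<notin> F" using x xB(2) CF by blast
    ultimately have "x \<in> Q" using esc unfolding Q_def by simp
    then show False using \<open>x \<notin> Q\<close> by simp
  qed
  moreover have "A \<inter> C \<noteq> {}" proof - have "p \<in> A \<inter> C" using pC d unfolding A_def by simp then show ?thesis by blast qed
  moreover have "B \<inter> C \<noteq> {}"
  proof -
    have "x0 \<notin> closure Q" using inQ x0 by blast
    then show ?thesis using x0 unfolding B_def by blast
  qed
  ultimately show False using connectedD[OF C oA oB] by blast
qed

lemma join_seg:
  fixes U F :: "'a::real_normed_vector set"
  assumes seg: "closed_segment p q0 \<subseteq> U" "closed_segment p q0 \<inter> F \<subseteq> {p}"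
    and pc: "path_component (U - F) q0 z"
  shows "\<exists>g. path g \<and> pathstart g = p \<and> pathfinish g = z \<and> path_image g \<subseteq> U \<and> path_image g \<inter> F \<subseteq> {p}"
proof -
  obtain h where h: "path h" "path_image h \<subseteq> U - F" "pathstart h = q0" "pathfinish h = z"
    using pc unfolding path_component_def by blast
  define g where "g = linepath p q0 +++ h"
  have "path g" unfolding g_def using h by (intro path_join_imp) auto
  moreover have "pathstart g = p" "pathfinish g = z" unfolding g_def using h by auto
  moreover have "path_image g = closed_segment p q0 \<union> path_image h"
    unfolding g_def using h by (subst path_image_join) auto
  ultimately show ?thesis using seg h(2) by (intro exI[of _ g]) blast
qed

lemma reach_final:
  fixes U F C :: "(real^2) set"
  assumes U: "open U" and F: "closed F" and pU: "p \<in> U" and pF: "p \<in> F" and st: "straight F p"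
    and C: "connected C" and pC: "p \<in> C" and CF: "C \<inter> F \<subseteq> {p}" and CU: "C \<subseteq> U" and c: "c \<in> C"
  shows "\<exists>g. path g \<and> pathstart g = p \<and> pathfinish g = c \<and> path_image g \<subseteq> U \<and> path_image g \<inter> F \<subseteq> {p}"
proof -
  obtain q0 \<delta> where d: "\<delta> > 0" "ball p \<delta> \<subseteq> U" and seg: "closed_segment p q0 \<subseteq> U"
     "closed_segment p q0 \<inter> F \<subseteq> {p}"
     and esc: "\<And>x. x \<in> ball p \<delta> \<Longrightarrow> x \<notin> F \<Longrightarrow> path_component (U - F) q0 x"
    using escape[OF U F pU pF st] by metis
  have "C \<subseteq> path_component_set (U - F) q0 \<union> {p}"
    using clopen_arg[OF U F pF d(1) esc C pC CF] CU by blast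
  then consider "c = p" | "path_component (U - F) q0 c" using c by auto
  then show ?thesis
  proof cases
    case 1
    have "path (linepath p p)" "path_image (linepath p p) = {p}" by auto
    then show ?thesis using 1 pU by (intro exI[of _ "linepath p p"]) auto
  next
    case 2 then show ?thesis using join_seg[OF seg] by blast
  qed
qed

lemma reach_T:
  fixes U F C T :: "(real^2) set"
  assumes U: "open U" and F: "closed F" and pU: "p \<in> U" and pF: "p \<in> F" and st: "straight F p"
    and C: "connected C" and pC: "p \<in> C" and CF: "C \<inter> F \<subseteq> {p}"
    and CT: "\<And>x. x \<in> C \<Longrightarrow> x \<in> U \<or> x \<in> interior T \<or> x \<notin> closure U"
    and c: "c \<in> C" "c \<noteq> p" "c \<in> T \<or> c \<notin> U"
  shows "\<exists>g. path g \<and> pathstart g = p \<and> pathfinish g \<in> T \<and> path_image g \<subseteq> U \<and> path_image g \<inter> F \<subseteq> {p}"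
proof -
  obtain q0 \<delta> where d: "\<delta> > 0" "ball p \<delta> \<subseteq> U" and seg: "closed_segment p q0 \<subseteq> U"
     "closed_segment p q0 \<inter> F \<subseteq> {p}"
     and esc: "\<And>x. x \<in> ball p \<delta> \<Longrightarrow> x \<notin> F \<Longrightarrow> path_component (U - F) q0 x"
    using escape[OF U F pU pF st] by metis
  define Q where "Q = path_component_set (U - F) q0"
  show ?thesis
  proof (cases "Q \<inter> T = {}")
    case False
    then obtain z where z: "z \<in> Q" "z \<in> T" by blast
    then have "path_component (U - F) q0 z" unfolding Q_def by simp
    then show ?thesis using join_seg[OF seg] z(2) by blast
  next
    case True
    have QU: "Q \<subseteq> U" unfolding Q_def using path_component_subset by blast
    have "x \<in> U" if x: "x \<in> C" "x \<in> closure Q" for x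
    proof -
      consider "x \<in> U" | "x \<in> interior T" | "x \<notin> closure U" using CT[OF x(1)] by blast
      then show ?thesis
      proof cases
        case 2
        have "interior T \<inter> closure Q \<noteq> {}" using 2 x(2) by blast
        then have "interior T \<inter> Q \<noteq> {}" using open_Int_closure_eq_empty[of "interior T" Q] by simp
        then show ?thesis using True interior_subset by blast
      next
        case 3
        have "closure Q \<subseteq> closure U" using QU by (rule closure_mono)
        then show ?thesis using 3 x(2) by blast
      qed
    qed
    then have "C \<subseteq> Q \<union> {p}"
      using clopen_arg[OF U F pF d(1) esc C pC CF] unfolding Q_def by blast
    then have "c \<in> Q" using c by blast
    then show ?thesis using True QU c(3) by blast
  qed
qed

lemma first_hit:
  fixes f :: "real \<Rightarrow> 'a::real_normed_vector"
  assumes f: "continuous_on {0..1} f" and T: "closed T" and f1: "f 1 \<in> T"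
  obtains t where "t \<in> {0..1}" "f t \<in> T" "\<And>\<tau>. \<tau> \<in> {0..1} \<Longrightarrow> f \<tau> \<in> T \<Longrightarrow> t \<le> \<tau>"
proof -
  define K where "K = {0..1} \<inter> f -` T"
  have K: "closed K" unfolding K_def using f T by (intro continuous_closed_preimage) auto
  have "1 \<in> K" unfolding K_def using f1 by simp
  then have Kne: "K \<noteq> {}" by blast
  have bdd: "bdd_below K" unfolding K_def by (rule bdd_belowI[of _ 0]) auto
  have tK: "Inf K \<in> K" using closed_contains_Inf[OF Kne bdd K] .
  have low: "Inf K \<le> \<tau>" if "\<tau> \<in> {0..1}" "f \<tau> \<in> T" for \<tau>
  proof -
    have "\<tau> \<in> K" unfolding K_def using that by simp
    then show ?thesis using bdd by (rule cInf_lower)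
  qed
  show ?thesis using that[of "Inf K"] tK low unfolding K_def by blast
qed

lemma first_hit_arc:
  fixes g :: "real \<Rightarrow> 'a::euclidean_space"
  assumes g: "path g" "pathstart g = p" "pathfinish g \<in> T" and pT: "p \<notin> T" and T: "closed T"
    and U: "open U" and F: "closed F" and gU: "path_image g \<subseteq> U" and gF: "path_image g \<inter> F \<subseteq> {p}"
  obtains \<alpha> where "arc \<alpha>" "pathstart \<alpha> = p" "pathfinish \<alpha> \<in> T" "path_image \<alpha> \<subseteq> U"
    "path_image \<alpha> \<inter> F \<subseteq> {p}" "path_image \<alpha> \<inter> T = {pathfinish \<alpha>}"
    "straight (path_image \<alpha>) (pathfinish \<alpha>)"
proof -
  have gc: "continuous_on {0..1} g" using g(1) unfolding path_def .
  obtain t where t01: "t \<in> {0..1}" and gt: "g t \<in> T"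
    and tlow: "\<And>\<tau>. \<tau> \<in> {0..1} \<Longrightarrow> g \<tau> \<in> T \<Longrightarrow> t \<le> \<tau>"
    using first_hit[OF gc T] g(3) unfolding pathfinish_def by metis
  have g0: "g 0 = p" using g(2) unfolding pathstart_def .
  have "t \<noteq> 0" using gt g0 pT by auto
  then have tpos: "t > 0" using t01 by simp
  define y where "y = g t"
  have yim: "y \<in> path_image g" unfolding y_def path_image_def using t01 by simp
  have yU: "y \<in> U" using yim gU by blast
  have ynp: "y \<noteq> p" using gt pT unfolding y_def by auto
  have yF: "y \<notin> F" using yim gF ynp by blast
  have "open (U - F)" using U F by (rule open_Diff)
  then obtain \<epsilon> where eps: "\<epsilon> > 0" "ball y \<epsilon> \<subseteq> U - F" using yU yF openE by (metis Diff_iff)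
  obtain \<eta> where eta: "\<eta> > 0" and etaP: "\<And>\<tau>. \<tau> \<in> {0..1} \<Longrightarrow> dist \<tau> t < \<eta> \<Longrightarrow> dist (g \<tau>) (g t) < \<epsilon>"
    using gc t01 eps(1) unfolding continuous_on_iff by metis
  define s where "s = max 0 (t - \<eta>/2)"
  have s0: "0 \<le> s" and st: "s < t" using tpos eta unfolding s_def by auto
  have s01: "s \<in> {0..1}" using s0 st t01 by simp
  have "dist s t < \<eta>" using eta tpos unfolding s_def dist_real_def by auto
  then have "dist (g s) y < \<epsilon>" using etaP s01 unfolding y_def by blast
  then have wb: "g s \<in> ball y \<epsilon>" by (simp add: dist_commute)
  define w where "w = g s"
  have wT: "w \<notin> T"
  proof
    assume "w \<in> T"
    then have "t \<le> s" using tlow s01 unfolding w_def by blast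
    then show False using st by simp
  qed
  have lc: "continuous_on {0..1} (linepath w y)" by (rule continuous_on_linepath)
  have "linepath w y 1 \<in> T" using gt unfolding y_def by (simp add: linepath_1')
  then obtain lam where l01: "lam \<in> {0..1}" and lT: "linepath w y lam \<in> T"
    and llow: "\<And>\<mu>. \<mu> \<in> {0..1} \<Longrightarrow> linepath w y \<mu> \<in> T \<Longrightarrow> lam \<le> \<mu>"
    using first_hit[OF lc T] by metis
  have "lam \<noteq> 0" using lT wT by (auto simp: linepath_0')
  then have lpos: "lam > 0" using l01 by simp
  define y' where "y' = linepath w y lam"
  have y'T: "y' \<in> T" using lT unfolding y'_def .
  have wy': "w \<noteq> y'" using wT y'T by blast
  have y'seg: "y' \<in> closed_segment w y" unfolding y'_def using l01 by (rule linepath_in_path)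
  have segb: "closed_segment w y \<subseteq> ball y \<epsilon>"
    using wb eps(1) unfolding w_def by (simp add: closed_segment_subset convex_ball)
  have seg2: "closed_segment w y' \<subseteq> closed_segment w y"
    using y'seg by (simp add: closed_segment_subset convex_closed_segment)
  have segUF: "closed_segment w y' \<subseteq> U - F" using seg2 segb eps(2) by blast
  define G where "G = g ` {0..s}"
  have GU: "G \<subseteq> path_image g" unfolding G_def path_image_def using st t01 by auto
  have GT: "G \<inter> T = {}"
  proof (rule equals0I)
    fix z assume "z \<in> G \<inter> T"
    then obtain \<tau> where tau: "\<tau> \<in> {0..s}" "g \<tau> \<in> T" unfolding G_def by blast
    have "\<tau> \<in> {0..1}" using tau(1) s01 by simp
    then have "t \<le> \<tau>" using tlow tau(2) by blast
    then show False using tau(1) st by simp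
  qed
  have segT: "closed_segment w y' \<inter> T \<subseteq> {y'}"
  proof
    fix z assume z: "z \<in> closed_segment w y' \<inter> T"
    have zs: "z \<in> closed_segment w y'" using z by simp
    then obtain \<mu> where mu: "0 \<le> \<mu>" "\<mu> \<le> 1" and zeq: "z = (1 - \<mu>) *\<^sub>R w + \<mu> *\<^sub>R y'"
      unfolding in_segment by blast
    have "z = linepath w y (\<mu> * lam)"
      unfolding zeq y'_def linepath_def by (simp add: algebra_simps)
    moreover have "\<mu> * lam \<in> {0..1}" using mu l01 by (simp add: mult_le_one)
    ultimately have "lam \<le> \<mu> * lam" using llow z by simp
    then have "1 \<le> \<mu>" using lpos by simp
    then have "\<mu> = 1" using mu by simp
    then show "z \<in> {y'}" using zeq by simp
  qed
  define \<pi> where "\<pi> = subpath 0 s g +++ linepath w y'"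
  have pis: "pathstart \<pi> = p" unfolding \<pi>_def using g0 by simp
  have pif: "pathfinish \<pi> = y'" unfolding \<pi>_def by simp
  have pip: "path \<pi>" unfolding \<pi>_def using g(1) s01 unfolding w_def
    by (intro path_join_imp) auto
  have piim: "path_image \<pi> = G \<union> closed_segment w y'"
    unfolding \<pi>_def G_def using s0 unfolding w_def
    by (subst path_image_join) (auto simp: path_image_subpath)
  have piU: "path_image \<pi> \<subseteq> U" using piim GU gU segUF by blast
  have piF: "path_image \<pi> \<inter> F \<subseteq> {p}" using piim GU gF segUF by blast
  have piT: "path_image \<pi> \<inter> T \<subseteq> {y'}" using piim GT segT by blast
  have Gc: "compact G" unfolding G_def
    using gc s01 by (intro compact_continuous_image) (auto intro: continuous_on_subset)
  have "y' \<notin> G" using GT y'T by blast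
  moreover have "open (- G)" using Gc by (simp add: compact_imp_closed open_Compl)
  ultimately obtain \<delta> where dl: "\<delta> > 0" "ball y' \<delta> \<subseteq> - G" using openE by (metis ComplI)
  define u where "u = (1 / norm (y' - w)) *\<^sub>R (y' - w)"
  have nyw: "norm (y' - w) > 0" using wy' by simp
  have un: "norm u = 1" unfolding u_def using nyw by simp
  have segray: "closed_segment w y' \<subseteq> ray y' u"
  proof
    fix z assume "z \<in> closed_segment w y'"
    then obtain \<mu> where mu: "0 \<le> \<mu>" "\<mu> \<le> 1" and zeq: "z = (1 - \<mu>) *\<^sub>R w + \<mu> *\<^sub>R y'"
      unfolding in_segment by blast
    have "((1 - \<mu>) * norm (y' - w)) *\<^sub>R u = (1 - \<mu>) *\<^sub>R (y' - w)"
      unfolding u_def using nyw by simp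
    then have "z = y' - ((1 - \<mu>) * norm (y' - w)) *\<^sub>R u"
      unfolding zeq by (simp add: algebra_simps)
    moreover have "(1 - \<mu>) * norm (y' - w) \<ge> 0" using mu by simp
    ultimately show "z \<in> ray y' u" unfolding ray_def by blast
  qed
  have "path_image \<pi> \<inter> ball y' \<delta> \<subseteq> ray y' u" using piim dl(2) segray by blast
  then have pist: "straight (path_image \<pi>) y'" unfolding straight_def using dl(1) un by blast
  have pny: "p \<noteq> y'" using pT y'T by blast
  obtain \<alpha> where a: "arc \<alpha>" "path_image \<alpha> \<subseteq> path_image \<pi>" "pathstart \<alpha> = p" "pathfinish \<alpha> = y'"
    using path_contains_arc[OF pip pis pif pny] by blast
  have "y' \<in> path_image \<alpha>" using a(4) pathfinish_in_path_image by metis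
  then have "path_image \<alpha> \<inter> T = {pathfinish \<alpha>}" using a(2,4) piT y'T by blast
  moreover have "straight (path_image \<alpha>) (pathfinish \<alpha>)" using straight_subset[OF pist a(2)] a(4) by simp
  ultimately show ?thesis using that[OF a(1) a(3)] a(2,4) y'T piU piF by blast
qed

lemma jordan_path: "jordan_arc g \<Longrightarrow> path g"
  unfolding jordan_arc_def
proof (elim disjE exE)
  fix c assume c: "\<forall>t\<in>{0..1}. g t = c"
  have "continuous_on {0..1} (\<lambda>t. c)" by simp
  then show "path g" unfolding path_def by (rule continuous_on_eq) (use c in simp)
qed (rule arc_imp_path)

lemma jordan_traversed: "jordan_arc g \<Longrightarrow> traversed_jordan_arc g"
proof -
  assume j: "jordan_arc g"
  have "\<forall>s t. 0 \<le> s \<and> s \<le> t \<and> t \<le> 1 \<and> g s = g t \<longrightarrow> (\<forall>u\<in>{s..t}. g u = g s)"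
  proof (intro allI impI)
    fix s t assume st: "0 \<le> s \<and> s \<le> t \<and> t \<le> 1 \<and> g s = g t"
    show "\<forall>u\<in>{s..t}. g u = g s"
    proof (cases "arc g")
      case True
      have "s = t" using arcD[OF True, of s t] st by simp
      then show ?thesis by simp
    next
      case False
      then obtain c where c: "\<forall>t\<in>{0..1}. g t = c" using j unfolding jordan_arc_def by blast
      show ?thesis
      proof
        fix u assume "u \<in> {s..t}"
        then have "u \<in> {0..1}" "s \<in> {0..1}" using st by auto
        then show "g u = g s" using c by simp
      qed
    qed
  qed
  then show ?thesis unfolding traversed_jordan_arc_def using jordan_path[OF j] by blast
qed

lemma traversed_join:
  assumes t1: "traversed_jordan_arc g1" and t2: "traversed_jordan_arc g2"
    and e: "pathfinish g1 = pathstart g2"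
    and d: "path_image g1 \<inter> path_image g2 \<subseteq> {pathstart g2}"
  shows "traversed_jordan_arc (g1 +++ g2)"
proof -
  have p1: "path g1" and f1: "\<And>s t u. 0 \<le> s \<Longrightarrow> s \<le> t \<Longrightarrow> t \<le> 1 \<Longrightarrow> g1 s = g1 t \<Longrightarrow> u \<in> {s..t} \<Longrightarrow> g1 u = g1 s"
    using t1 unfolding traversed_jordan_arc_def by blast+
  have p2: "path g2" and f2: "\<And>s t u. 0 \<le> s \<Longrightarrow> s \<le> t \<Longrightarrow> t \<le> 1 \<Longrightarrow> g2 s = g2 t \<Longrightarrow> u \<in> {s..t} \<Longrightarrow> g2 u = g2 s"
    using t2 unfolding traversed_jordan_arc_def by blast+
  have e': "g1 1 = g2 0" using e unfolding pathfinish_def pathstart_def .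
  have "\<forall>s t. 0 \<le> s \<and> s \<le> t \<and> t \<le> 1 \<and> (g1 +++ g2) s = (g1 +++ g2) t \<longrightarrow> (\<forall>u\<in>{s..t}. (g1 +++ g2) u = (g1 +++ g2) s)"
  proof (intro allI impI ballI)
    fix s t u assume st: "0 \<le> s \<and> s \<le> t \<and> t \<le> 1 \<and> (g1 +++ g2) s = (g1 +++ g2) t" and u: "u \<in> {s..t}"
    have s0: "0 \<le> s" and stt: "s \<le> t" and t1': "t \<le> 1" and eq: "(g1 +++ g2) s = (g1 +++ g2) t" using st by auto
    have us: "s \<le> u" "u \<le> t" using u by auto
    show "(g1 +++ g2) u = (g1 +++ g2) s"
    proof (cases "t \<le> 1/2")
      case True
      then have "g1 (2 * s) = g1 (2 * t)" using eq stt by (simp add: joinpaths_def)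
      then have "g1 (2 * u) = g1 (2 * s)" using f1[of "2 * s" "2 * t" "2 * u"] s0 stt True us by simp
      then show ?thesis using True us by (simp add: joinpaths_def)
    next
      case tgt: False
      show ?thesis
      proof (cases "s > 1/2")
        case True
        then have "g2 (2 * s-1) = g2 (2 * t-1)" using eq stt by (simp add: joinpaths_def)
        then have "g2 (2 * u-1) = g2 (2 * s-1)" using f2[of "2 * s-1" "2 * t-1" "2 * u-1"] True stt t1' us by simp
        then show ?thesis using True us by (simp add: joinpaths_def)
      next
        case False
        then have eq2: "g1 (2 * s) = g2 (2 * t-1)" using eq tgt by (simp add: joinpaths_def)
        have "2 * s \<in> {0..1}" using False s0 by simp
        then have i1: "g1 (2 * s) \<in> path_image g1" unfolding path_image_def by (rule imageI)
        have "2 * t - 1 \<in> {0..1}" using tgt t1' by simp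
        then have i2: "g2 (2 * t-1) \<in> path_image g2" unfolding path_image_def by (rule imageI)
        have "g1 (2 * s) \<in> path_image g1 \<inter> path_image g2" using i1 i2 eq2 by simp
        then have "g1 (2 * s) = pathstart g2" using d by blast
        then have c1: "g1 (2 * s) = g2 0" unfolding pathstart_def .
        then have c2: "g2 (2 * t-1) = g2 0" using eq2 by simp
        show ?thesis
        proof (cases "u \<le> 1/2")
          case True
          have "g1 (2 * s) = g1 1" using c1 e' by simp
          then have "g1 (2 * u) = g1 (2 * s)" using f1[of "2 * s" 1 "2 * u"] s0 False True us by simp
          then show ?thesis using True False by (simp add: joinpaths_def)
        next
          case ugt: False
          have "g2 0 = g2 (2 * t-1)" using c2 by simp
          then have "g2 (2 * u-1) = g2 0" using f2[of 0 "2 * t-1" "2 * u-1"] tgt t1' ugt us by simp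
          then show ?thesis using ugt False c1 by (simp add: joinpaths_def)
        qed
      qed
    qed
  qed
  moreover have "path (g1 +++ g2)" using p1 p2 e by (rule path_join_imp)
  ultimately show ?thesis unfolding traversed_jordan_arc_def by blast
qed

lemma join_list_chain:
  assumes "gs \<noteq> []" "\<forall>g\<in>set gs. jordan_arc g"
    and "\<forall>i. Suc i < length gs \<longrightarrow> pathfinish (gs!i) = pathstart (gs!(Suc i))"
    and "\<forall>i j. i < j \<and> j < length gs \<longrightarrow> path_image (gs!i) \<inter> path_image (gs!j) \<subseteq> {pathfinish (gs!i)}"
  shows "traversed_jordan_arc (join_list gs) \<and> pathstart (join_list gs) = pathstart (hd gs)
     \<and> pathfinish (join_list gs) = pathfinish (last gs) \<and> path_image (join_list gs) = (\<Union>g\<in>set gs. path_image g)"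
  using assms
proof (induction gs)
  case Nil then show ?case by simp
next
  case (Cons g gs)
  show ?case
  proof (cases "gs = []")
    case True
    then show ?thesis using Cons.prems jordan_traversed by simp
  next
    case False
    have IH: "traversed_jordan_arc (join_list gs) \<and> pathstart (join_list gs) = pathstart (hd gs)
     \<and> pathfinish (join_list gs) = pathfinish (last gs) \<and> path_image (join_list gs) = (\<Union>g\<in>set gs. path_image g)"
    proof (rule Cons.IH[OF False])
      show "\<forall>g\<in>set gs. jordan_arc g" using Cons.prems(2) by simp
      show "\<forall>i. Suc i < length gs \<longrightarrow> pathfinish (gs!i) = pathstart (gs!(Suc i))"
      proof (intro allI impI)
        fix i assume "Suc i < length gs"
        then show "pathfinish (gs!i) = pathstart (gs!(Suc i))" using Cons.prems(3)[rule_format, of "Suc i"] by simp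
      qed
      show "\<forall>i j. i < j \<and> j < length gs \<longrightarrow> path_image (gs!i) \<inter> path_image (gs!j) \<subseteq> {pathfinish (gs!i)}"
      proof (intro allI impI)
        fix i j assume "i < j \<and> j < length gs"
        then show "path_image (gs!i) \<inter> path_image (gs!j) \<subseteq> {pathfinish (gs!i)}"
          using Cons.prems(4)[rule_format, of "Suc i" "Suc j"] by simp
      qed
    qed
    obtain h hs where gs: "gs = h # hs" using False by (cases gs) auto
    have jl: "join_list (g # gs) = g +++ join_list gs" unfolding gs by simp
    have jg: "jordan_arc g" using Cons.prems(2) by simp
    have e: "pathfinish g = pathstart (join_list gs)"
      using IH Cons.prems(3)[rule_format, of 0] gs by simp
    have dis: "path_image g \<inter> path_image (join_list gs) \<subseteq> {pathstart (join_list gs)}"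
    proof
      fix x assume x: "x \<in> path_image g \<inter> path_image (join_list gs)"
      then obtain k where k: "k < length gs" "x \<in> path_image (gs!k)" using IH by (auto simp: in_set_conv_nth)
      have "x \<in> {pathfinish ((g#gs)!0)}"
        using Cons.prems(4)[rule_format, of 0 "Suc k"] k x by auto
      then show "x \<in> {pathstart (join_list gs)}" using e by simp
    qed
    have "traversed_jordan_arc (g +++ join_list gs)"
      using traversed_join[OF jordan_traversed[OF jg] _ e dis] IH by blast
    moreover have "path_image (g +++ join_list gs) = path_image g \<union> path_image (join_list gs)"
      using e by (rule path_image_join)
    ultimately show ?thesis using jl IH e gs by simp
  qed
qed

lemma int_of_disj:
  fixes A B :: "'a::topological_space set"
  assumes "A \<inter> closure (UNIV - B) = {}" "x \<in> A"
  shows "x \<in> interior B"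
proof -
  have "closure (UNIV - B) = - interior B" using closure_complement[of B] by (simp add: Compl_eq_Diff_UNIV)
  then show ?thesis using assms by blast
qed

lemma rc_closed: "regular_closed S \<Longrightarrow> closed S"
  unfolding regular_closed_def by (metis closed_closure)

lemma jordan_const: "jordan_arc (linepath p p)"
  unfolding jordan_arc_def linepath_def by (intro disjI2 exI[of _ p]) (simp add: scaleR_left_distrib[symmetric])

lemma path_image_const: "path_image (linepath p p) = {p}"
  by simp

theorem lemma5p6:
  fixes n :: nat
    and a a' a'' :: "nat \<Rightarrow> (real^2) set"
  assumes "n \<ge> 2"
    and "\<forall>i\<in>{1..n}. regular_closed (a i) \<and> regular_closed (a' i) \<and> regular_closed (a'' i)"
    and "\<forall>i\<in>{1..n}. a'' i \<noteq> {}"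
    and "\<forall>i\<in>{1..n}. a'' i \<inter> closure (UNIV - a' i) = {}"
    and "\<forall>i\<in>{1..n}. a' i \<inter> closure (UNIV - a i) = {}"
    and "\<forall>i\<in>{1..n-1}. connected (a' i \<union> (\<Union>j\<in>{i+1..n}. a'' j))"
    and "connected (a' n)"
    and "\<forall>i\<in>{1..n}. \<forall>j\<in>{1..n}. j > i + 1 \<longrightarrow> a i \<inter> a j = {}"
  shows "\<forall>p0\<in>a' 1. \<forall>pn\<in>a'' n. \<exists>(p :: nat \<Rightarrow> real^2) (\<alpha> :: nat \<Rightarrow> real \<Rightarrow> real^2).
           p 0 = p0 \<and> p n = pn \<and>
           (\<forall>i\<in>{1..n}. jordan_arc (\<alpha> i) \<and> pathstart (\<alpha> i) = p (i - 1) \<and> pathfinish (\<alpha> i) = p i) \<and>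
           traversed_jordan_arc (join_list (map \<alpha> [1..<n+1])) \<and>
           (\<forall>i\<in>{1..<n}. p i \<in> a' (i + 1) \<inter> path_image (\<alpha> i)) \<and>
           (\<forall>i\<in>{1..n}. path_image (\<alpha> i) \<subseteq> a i)"
proof (intro ballI)
  fix p0 pn assume p0: "p0 \<in> a' 1" and pn: "pn \<in> a'' n"
  note n2 = assms(1)
  have clo: "closed (a i)" if "i \<in> {1..n}" for i using assms(2) that rc_closed by blast
  have clo': "closed (a' i)" if "i \<in> {1..n}" for i using assms(2) that rc_closed by blast
  have sub1: "x \<in> interior (a i)" if "i \<in> {1..n}" "x \<in> a' i" for i x
    using int_of_disj[of "a' i" "a i" x] assms(5) that by blast
  have sub2: "x \<in> interior (a' i)" if "i \<in> {1..n}" "x \<in> a'' i" for i x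
    using int_of_disj[of "a'' i" "a' i" x] assms(4) that by blast
  have sub3: "x \<in> a i" if "i \<in> {1..n}" "x \<in> a'' i" for i x
    using sub1[OF that(1)] sub2[OF that] interior_subset by blast
  have dis: "a i \<inter> a j = {}" if "i \<in> {1..n}" "j \<in> {1..n}" "j > i + 1" for i j
    using assms(8) that by blast
  have conn: "connected (a' i \<union> (\<Union>j\<in>{i+1..n}. a'' j))" if "i \<in> {1..n-1}" for i
    using assms(6) that by blast
  define P where "P k \<longleftrightarrow> (\<exists>(p :: nat \<Rightarrow> real^2) (\<alpha> :: nat \<Rightarrow> real \<Rightarrow> real^2). p 0 = p0 \<and>
     (\<forall>i\<in>{1..k}. jordan_arc (\<alpha> i) \<and> pathstart (\<alpha> i) = p (i - 1) \<and> pathfinish (\<alpha> i) = p i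
        \<and> path_image (\<alpha> i) \<subseteq> a i \<and> p i \<in> a' (i + 1)) \<and>
     (\<forall>i. 1 \<le> i \<and> i < k \<longrightarrow> path_image (\<alpha> i) \<inter> path_image (\<alpha> (Suc i)) \<subseteq> {p i}) \<and>
     path (\<alpha> k) \<and> pathfinish (\<alpha> k) = p k \<and>
     path_image (\<alpha> k) \<inter> a' (k + 1) = {p k} \<and> straight (path_image (\<alpha> k)) (p k) \<and>
     (k = 0 \<longrightarrow> path_image (\<alpha> 0) = {p0}))" for k
  have P0: "P 0"
    unfolding P_def
    by (rule exI[of _ "\<lambda>_. p0"], rule exI[of _ "\<lambda>_. linepath p0 p0"]) (use p0 straight_sing in simp)

  have Pk: "P k" if "k \<le> n - 1" for k
    using that
  proof (induction k)
    case 0 show ?case by (rule P0)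
  next
    case (Suc k)
    then have kn: "Suc k \<le> n - 1" by simp
    then have Pk: "P k" using Suc.IH by simp
    obtain p \<alpha> where hp0: "p 0 = p0"
      and hA: "\<forall>i\<in>{1..k}. jordan_arc (\<alpha> i) \<and> pathstart (\<alpha> i) = p (i - 1) \<and> pathfinish (\<alpha> i) = p i
        \<and> path_image (\<alpha> i) \<subseteq> a i \<and> p i \<in> a' (i + 1)"
      and hB: "\<forall>i. 1 \<le> i \<and> i < k \<longrightarrow> path_image (\<alpha> i) \<inter> path_image (\<alpha> (Suc i)) \<subseteq> {p i}"
      and hpath: "path (\<alpha> k)" and hfin: "pathfinish (\<alpha> k) = p k"
      and hT: "path_image (\<alpha> k) \<inter> a' (k + 1) = {p k}" and hst: "straight (path_image (\<alpha> k)) (p k)"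
      and h0: "k = 0 \<longrightarrow> path_image (\<alpha> 0) = {p0}"
      using Pk unfolding P_def by blast
    define F where "F = path_image (\<alpha> k)"
    define pk where "pk = p k"
    have k1: "Suc k \<in> {1..n}" "Suc k \<in> {1..n-1}" "Suc (Suc k) \<in> {1..n}" using kn n2 by auto
    have pkA: "pk \<in> a' (Suc k)" using hT unfolding pk_def by auto
    have pkU: "pk \<in> interior (a (Suc k))" using sub1[OF k1(1) pkA] .
    have Fcl: "closed F" unfolding F_def using hpath by (intro compact_imp_closed compact_path_image)
    have pkF: "pk \<in> F" using hT unfolding F_def pk_def by auto
    have ext: "P (Suc k)" if b: "jordan_arc \<beta>" "path \<beta>" "pathstart \<beta> = pk" "path_image \<beta> \<subseteq> a (Suc k)"
        "pathfinish \<beta> \<in> a' (Suc (Suc k))" "F \<inter> path_image \<beta> \<subseteq> {pk}"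
        "path_image \<beta> \<inter> a' (Suc (Suc k)) = {pathfinish \<beta>}" "straight (path_image \<beta>) (pathfinish \<beta>)" for \<beta>
    proof -
      define p' where "p' = p(Suc k := pathfinish \<beta>)"
      define \<alpha>' where "\<alpha>' = \<alpha>(Suc k := \<beta>)"
      have c1: "p' 0 = p0" unfolding p'_def using hp0 by simp
      have c2: "\<forall>i\<in>{1..Suc k}. jordan_arc (\<alpha>' i) \<and> pathstart (\<alpha>' i) = p' (i - 1) \<and> pathfinish (\<alpha>' i) = p' i
        \<and> path_image (\<alpha>' i) \<subseteq> a i \<and> p' i \<in> a' (i + 1)"
      proof
        fix i assume i: "i \<in> {1..Suc k}"
        show "jordan_arc (\<alpha>' i) \<and> pathstart (\<alpha>' i) = p' (i - 1) \<and> pathfinish (\<alpha>' i) = p' i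
          \<and> path_image (\<alpha>' i) \<subseteq> a i \<and> p' i \<in> a' (i + 1)"
        proof (cases "i = Suc k")
          case True
          then show ?thesis unfolding p'_def \<alpha>'_def using b unfolding pk_def by simp
        next
          case False
          then have ik: "i \<in> {1..k}" using i by simp
          then have "i - 1 \<noteq> Suc k" by auto
          then show ?thesis unfolding p'_def \<alpha>'_def using hA ik False by simp
        qed
      qed
      have c3: "\<forall>i. 1 \<le> i \<and> i < Suc k \<longrightarrow> path_image (\<alpha>' i) \<inter> path_image (\<alpha>' (Suc i)) \<subseteq> {p' i}"
      proof (intro allI impI)
        fix i assume i: "1 \<le> i \<and> i < Suc k"
        show "path_image (\<alpha>' i) \<inter> path_image (\<alpha>' (Suc i)) \<subseteq> {p' i}"
        proof (cases "i = k")
          case True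
          then show ?thesis unfolding p'_def \<alpha>'_def using b(6) unfolding F_def pk_def by simp
        next
          case False
          then have "i < k" using i by simp
          then show ?thesis unfolding p'_def \<alpha>'_def using hB i by simp
        qed
      qed
      have c4: "path (\<alpha>' (Suc k)) \<and> pathfinish (\<alpha>' (Suc k)) = p' (Suc k) \<and>
     path_image (\<alpha>' (Suc k)) \<inter> a' (Suc k + 1) = {p' (Suc k)} \<and> straight (path_image (\<alpha>' (Suc k))) (p' (Suc k))"
        unfolding p'_def \<alpha>'_def using b by simp
      show ?thesis unfolding P_def using c1 c2 c3 c4 by blast
    qed
    show "P (Suc k)"
    proof (cases "pk \<in> a' (Suc (Suc k))")
      case True
      show ?thesis
      proof (rule ext[of "linepath pk pk"])
        show "jordan_arc (linepath pk pk)" by (rule jordan_const)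
        show "path (linepath pk pk)" by simp
        show "pathstart (linepath pk pk) = pk" by simp
        show "path_image (linepath pk pk) \<subseteq> a (Suc k)" using pkU interior_subset by auto
        show "pathfinish (linepath pk pk) \<in> a' (Suc (Suc k))" using True by simp
        show "F \<inter> path_image (linepath pk pk) \<subseteq> {pk}" by simp
        show "path_image (linepath pk pk) \<inter> a' (Suc (Suc k)) = {pathfinish (linepath pk pk)}" using True by simp
        show "straight (path_image (linepath pk pk)) (pathfinish (linepath pk pk))" using straight_sing by simp
      qed
    next
      case False
      define U where "U = interior (a (Suc k))"
      define T where "T = a' (Suc (Suc k))"
      define C where "C = a' (Suc k) \<union> (\<Union>j\<in>{Suc k+1..n}. a'' j)"
      have oU: "open U" unfolding U_def by simp
      have pkU': "pk \<in> U" using pkU unfolding U_def .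
      have Tcl: "closed T" unfolding T_def using clo' k1(3) .
      have Cc: "connected C" unfolding C_def using conn[OF k1(2)] .
      have pkC: "pk \<in> C" unfolding C_def using pkA by simp
      have CF: "C \<inter> F \<subseteq> {pk}"
      proof
        fix x assume x: "x \<in> C \<inter> F"
        show "x \<in> {pk}"
        proof (cases "x \<in> a' (Suc k)")
          case True then show ?thesis using x hT unfolding F_def pk_def by auto
        next
          case False
          then obtain j where j: "j \<in> {Suc k+1..n}" "x \<in> a'' j" using x unfolding C_def by blast
          show ?thesis
          proof (cases "k = 0")
            case True then show ?thesis using x h0 hp0 unfolding F_def pk_def by auto
          next
            case knz: False
            have kk: "k \<in> {1..k}" using knz by simp
            have xa: "x \<in> a k" using hA kk x unfolding F_def by blast
            have j1: "j \<in> {1..n}" using j by simp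
            have xj: "x \<in> a j" using sub3[OF j1 j(2)] .
            have "a k \<inter> a j = {}" using dis[of k j] j kn knz by simp
            then show ?thesis using xa xj by blast
          qed
        qed
      qed
      have CT: "x \<in> U \<or> x \<in> interior T \<or> x \<notin> closure U" if x: "x \<in> C" for x
      proof (cases "x \<in> a' (Suc k)")
        case True then show ?thesis using sub1[OF k1(1)] unfolding U_def by blast
      next
        case False
        then obtain j where j: "j \<in> {Suc k+1..n}" "x \<in> a'' j" using x unfolding C_def by blast
        show ?thesis
        proof (cases "j = Suc (Suc k)")
          case True then show ?thesis using sub2[OF k1(3)] j unfolding T_def by blast
        next
          case False
          have j1: "j \<in> {1..n}" using j by simp
          have xj: "x \<in> a j" using sub3[OF j1 j(2)] .
          have "a (Suc k) \<inter> a j = {}" using dis[OF k1(1) j1] j False by simp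
          moreover have "closure U \<subseteq> a (Suc k)" unfolding U_def
            using clo[OF k1(1)] interior_subset by (intro closure_minimal) auto
          ultimately show ?thesis using xj by blast
        qed
      qed
      have n_ge: "Suc (Suc k) \<le> n" using kn n2 by simp
      have pnC: "pn \<in> C" unfolding C_def using pn n_ge by auto
      have pnT: "pn \<in> T \<or> pn \<notin> U"
      proof (cases "n = Suc (Suc k)")
        case True
        then have "pn \<in> a' n" using sub2[of n pn] pn n2 interior_subset by auto
        then show ?thesis using True unfolding T_def by simp
      next
        case False
        have n1: "n \<in> {1..n}" using n2 by simp
        have "pn \<in> a n" using sub3[OF n1 pn] .
        moreover have "a (Suc k) \<inter> a n = {}" using dis[OF k1(1) n1] False n_ge by simp
        ultimately show ?thesis unfolding U_def using interior_subset by blast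
      qed
      have pnpk: "pn \<noteq> pk" using pnT False pkU' unfolding T_def by blast
      obtain g where g: "path g" "pathstart g = pk" "pathfinish g \<in> T" "path_image g \<subseteq> U" "path_image g \<inter> F \<subseteq> {pk}"
        using reach_T[OF oU Fcl pkU' pkF _ Cc pkC CF CT pnC pnpk pnT] hst unfolding F_def pk_def by blast
      have pkT: "pk \<notin> T" using False unfolding T_def .
      obtain \<beta> where bt: "arc \<beta>" "pathstart \<beta> = pk" "pathfinish \<beta> \<in> T" "path_image \<beta> \<subseteq> U"
        "path_image \<beta> \<inter> F \<subseteq> {pk}" "path_image \<beta> \<inter> T = {pathfinish \<beta>}"
        "straight (path_image \<beta>) (pathfinish \<beta>)"
        using first_hit_arc[OF g(1) g(2) g(3) pkT Tcl oU Fcl g(4) g(5)] by blast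
      show ?thesis
      proof (rule ext[of \<beta>])
        show "jordan_arc \<beta>" using bt(1) unfolding jordan_arc_def by simp
        show "path \<beta>" using bt(1) by (rule arc_imp_path)
        show "path_image \<beta> \<subseteq> a (Suc k)" using bt(4) interior_subset unfolding U_def by blast
        show "F \<inter> path_image \<beta> \<subseteq> {pk}" using bt(5) by blast
      qed (use bt in \<open>simp_all add: T_def\<close>)
    qed
  qed
  show "\<exists>(p :: nat \<Rightarrow> real^2) (\<alpha> :: nat \<Rightarrow> real \<Rightarrow> real^2).
           p 0 = p0 \<and> p n = pn \<and>
           (\<forall>i\<in>{1..n}. jordan_arc (\<alpha> i) \<and> pathstart (\<alpha> i) = p (i - 1) \<and> pathfinish (\<alpha> i) = p i) \<and>
           traversed_jordan_arc (join_list (map \<alpha> [1..<n+1])) \<and>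
           (\<forall>i\<in>{1..<n}. p i \<in> a' (i + 1) \<inter> path_image (\<alpha> i)) \<and>
           (\<forall>i\<in>{1..n}. path_image (\<alpha> i) \<subseteq> a i)"
  proof -
    define m where "m = n - 1"
    have mn: "Suc m = n" "m \<ge> 1" using n2 unfolding m_def by auto
    have Pm: "P m" using Pk unfolding m_def by simp
    obtain p \<alpha> where hp0: "p 0 = p0"
      and hA: "\<forall>i\<in>{1..m}. jordan_arc (\<alpha> i) \<and> pathstart (\<alpha> i) = p (i - 1) \<and> pathfinish (\<alpha> i) = p i
        \<and> path_image (\<alpha> i) \<subseteq> a i \<and> p i \<in> a' (i + 1)"
      and hB: "\<forall>i. 1 \<le> i \<and> i < m \<longrightarrow> path_image (\<alpha> i) \<inter> path_image (\<alpha> (Suc i)) \<subseteq> {p i}"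
      and hpath: "path (\<alpha> m)" and hfin: "pathfinish (\<alpha> m) = p m"
      and hT: "path_image (\<alpha> m) \<inter> a' (m + 1) = {p m}" and hst: "straight (path_image (\<alpha> m)) (p m)"
      using Pm unfolding P_def by blast
    define F where "F = path_image (\<alpha> m)"
    define pk where "pk = p m"
    define U where "U = interior (a n)"
    have n1: "n \<in> {1..n}" using n2 by simp
    have hT': "F \<inter> a' n = {pk}" using hT mn unfolding F_def pk_def by simp
    have pkA: "pk \<in> a' n" using hT' by blast
    have pkU: "pk \<in> U" using sub1[OF n1 pkA] unfolding U_def .
    have Fcl: "closed F" unfolding F_def using hpath by (intro compact_imp_closed compact_path_image)
    have pkF: "pk \<in> F" using hT' by blast
    have CF: "a' n \<inter> F \<subseteq> {pk}" using hT' by blast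
    have CU: "a' n \<subseteq> U" using sub1[OF n1] unfolding U_def by blast
    have pnA: "pn \<in> a' n" using sub2[OF n1 pn] interior_subset by blast
    obtain g where g: "path g" "pathstart g = pk" "pathfinish g = pn" "path_image g \<subseteq> U" "path_image g \<inter> F \<subseteq> {pk}"
      using reach_final[OF _ Fcl pkU pkF _ assms(7) pkA CF CU pnA] hst unfolding U_def F_def pk_def by auto
    obtain \<gamma> where ga: "jordan_arc \<gamma>" "pathstart \<gamma> = pk" "pathfinish \<gamma> = pn" "path_image \<gamma> \<subseteq> path_image g"
    proof (cases "pk = pn")
      case True
      show ?thesis
      proof (rule that[of "linepath pk pk"])
        show "path_image (linepath pk pk) \<subseteq> path_image g" using g(2) pathstart_in_path_image by auto
      qed (use True jordan_const in auto)
    next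
      case False
      obtain q where "arc q" "path_image q \<subseteq> path_image g" "pathstart q = pk" "pathfinish q = pn"
        using path_contains_arc[OF g(1) g(2) g(3) False] by blast
      then show ?thesis using that[of q] unfolding jordan_arc_def by blast
    qed
    define p' where "p' = p(n := pn)"
    define \<alpha>' where "\<alpha>' = \<alpha>(n := \<gamma>)"
    have A: "jordan_arc (\<alpha>' i) \<and> pathstart (\<alpha>' i) = p' (i - 1) \<and> pathfinish (\<alpha>' i) = p' i
        \<and> path_image (\<alpha>' i) \<subseteq> a i \<and> (i < n \<longrightarrow> p' i \<in> a' (i + 1))" if i: "i \<in> {1..n}" for i
    proof (cases "i = n")
      case True
      have "n - 1 \<noteq> n" using n2 by simp
      moreover have "path_image \<gamma> \<subseteq> a n" using ga(4) g(4) interior_subset unfolding U_def by blast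
      ultimately show ?thesis unfolding p'_def \<alpha>'_def using True ga mn unfolding pk_def m_def by simp
    next
      case False
      then have im: "i \<in> {1..m}" using i mn by auto
      have "i - 1 \<noteq> n" using i by auto
      then show ?thesis unfolding p'_def \<alpha>'_def using hA im False by simp
    qed
    have B: "path_image (\<alpha>' i) \<inter> path_image (\<alpha>' (Suc i)) \<subseteq> {p' i}" if i: "1 \<le> i" "i < n" for i
    proof (cases "i = m")
      case True
      have "path_image (\<alpha>' i) \<inter> path_image (\<alpha>' (Suc i)) = F \<inter> path_image \<gamma>"
        unfolding \<alpha>'_def F_def using True mn by simp
      also have "\<dots> \<subseteq> {pk}" using ga(4) g(5) by blast
      finally show ?thesis unfolding p'_def pk_def using True mn by simp
    next
      case False
      then have "i < m" using i mn by simp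
      then show ?thesis unfolding p'_def \<alpha>'_def using hB i mn by simp
    qed
    define gs where "gs = map \<alpha>' [1..<n+1]"
    have gsl: "length gs = n" unfolding gs_def by simp
    have gsn: "gs ! i = \<alpha>' (Suc i)" if "i < n" for i unfolding gs_def using that by (simp add: nth_map_upt del: upt_Suc)
    have J: "traversed_jordan_arc (join_list gs)"
    proof -
      have "gs \<noteq> []" using gsl n2 by auto
      moreover have "\<forall>g\<in>set gs. jordan_arc g"
      proof
        fix h assume "h \<in> set gs"
        then obtain i where "i < n" "h = gs ! i" using gsl by (auto simp: in_set_conv_nth)
        then show "jordan_arc h" using A[of "Suc i"] gsn by simp
      qed
      moreover have "\<forall>i. Suc i < length gs \<longrightarrow> pathfinish (gs!i) = pathstart (gs!(Suc i))"
      proof (intro allI impI)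
        fix i assume "Suc i < length gs"
        then have i: "Suc i < n" using gsl by simp
        then show "pathfinish (gs!i) = pathstart (gs!(Suc i))"
          using A[of "Suc i"] A[of "Suc (Suc i)"] gsn[of i] gsn[of "Suc i"] by simp
      qed
      moreover have "\<forall>i j. i < j \<and> j < length gs \<longrightarrow> path_image (gs!i) \<inter> path_image (gs!j) \<subseteq> {pathfinish (gs!i)}"
      proof (intro allI impI)
        fix i j assume ij: "i < j \<and> j < length gs"
        then have ij': "i < j" "j < n" using gsl by auto
        have e1: "gs ! i = \<alpha>' (Suc i)" "gs ! j = \<alpha>' (Suc j)" using gsn ij' by auto
        have fi: "pathfinish (\<alpha>' (Suc i)) = p' (Suc i)" using A[of "Suc i"] ij' by simp
        show "path_image (gs!i) \<inter> path_image (gs!j) \<subseteq> {pathfinish (gs!i)}"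
        proof (cases "j = Suc i")
          case True
          then show ?thesis using B[of "Suc i"] ij' e1 fi by simp
        next
          case False
          have s1: "path_image (\<alpha>' (Suc i)) \<subseteq> a (Suc i)" using A[of "Suc i"] ij' by simp
          have s2: "path_image (\<alpha>' (Suc j)) \<subseteq> a (Suc j)" using A[of "Suc j"] ij' by simp
          have d1: "Suc i \<in> {1..n}" "Suc j \<in> {1..n}" "Suc j > Suc i + 1" using ij' False by auto
          have dd: "a (Suc i) \<inter> a (Suc j) = {}" using dis[OF d1] .
          have "path_image (gs!i) \<inter> path_image (gs!j) \<subseteq> a (Suc i) \<inter> a (Suc j)"
            unfolding e1 using s1 s2 by blast
          then show ?thesis unfolding dd by blast
        qed
      qed
      ultimately show ?thesis using join_list_chain by blast
    qed
    show ?thesis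
    proof (intro exI conjI)
      show "p' 0 = p0" unfolding p'_def using hp0 n2 by simp
      show "p' n = pn" unfolding p'_def by simp
      show "\<forall>i\<in>{1..n}. jordan_arc (\<alpha>' i) \<and> pathstart (\<alpha>' i) = p' (i - 1) \<and> pathfinish (\<alpha>' i) = p' i"
        using A by blast
      show "traversed_jordan_arc (join_list (map \<alpha>' [1..<n+1]))" using J unfolding gs_def .
      show "\<forall>i\<in>{1..<n}. p' i \<in> a' (i + 1) \<inter> path_image (\<alpha>' i)"
      proof
        fix i assume i: "i \<in> {1..<n}"
        then have "i \<in> {1..n}" by simp
        then have h: "pathfinish (\<alpha>' i) = p' i" "p' i \<in> a' (i + 1)" using A i by auto
        then show "p' i \<in> a' (i + 1) \<inter> path_image (\<alpha>' i)" using pathfinish_in_path_image[of "\<alpha>' i"] by simp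
      qed
      show "\<forall>i\<in>{1..n}. path_image (\<alpha>' i) \<subseteq> a i" using A by blast
    qed
  qed
qed

end
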